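(* Let $f$ be an entire function of finite order and let $n(r)$ denote the number of zeros of $f$ (counted with multiplicity) in the closed disk $\{|z|\le r\}$. Suppose there exist $r_0>0$ and $K>1$ such that $n(2r)\le K\,n(r)$ for all $r\ge r_0$. For $\mu>0$ let $F_\mu$ be the set of all $r\ge r_0$ such that \[ n(t)\le \left(\tfrac{t}{r}\right)^{\mu} n(r)\ \text{ for all } t\ge r \qquad\text{and}\qquad n(t)\ge \left(\tfrac{t}{r}\right)^{\mu} n(r)\ \text{ for all } r_0\le t\le r . \] Then for every $\delta>0$ there exists $\mu>0$ such that $\operatorname{meas}\bigl(F_\mu\cap[R,2R]\bigr)\ge (1-\delta)R$ for all $R\ge 2r_0$.
   Context: $\operatorname{meas}$ denotes one-dimensional Lebesgue measure on $\mathbb R$. *)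

theory Defs
  imports "HOL-Analysis.Analysis"
begin

text \<open>Entire function of finite order: the order
  limsup log log M(r) / log r is finite, i.e. for some rho,
  M(r) = max_{|z| <= r} |f z| <= exp (r^rho) for all sufficiently large r.\<close>
definition finite_order :: "(complex \<Rightarrow> complex) \<Rightarrow> bool" where
  "finite_order f \<longleftrightarrow>
     (\<exists>\<rho>::real. \<forall>\<^sub>F r in at_top. \<forall>z. norm z \<le> r \<longrightarrow> norm (f z) \<le> exp (r powr \<rho>))"

definition zero_mult :: "(complex \<Rightarrow> complex) \<Rightarrow> complex \<Rightarrow> nat" where
  "zero_mult f z = (LEAST k. (deriv ^^ k) f z \<noteq> 0)"

definition zero_count :: "(complex \<Rightarrow> complex) \<Rightarrow> real \<Rightarrow> nat" where
  "zero_count f r = (\<Sum>z\<in>{z. f z = 0 \<and> norm z \<le> r}. zero_mult f z)"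

definition F_set :: "(complex \<Rightarrow> complex) \<Rightarrow> real \<Rightarrow> real \<Rightarrow> real set" where
  "F_set f r\<^sub>0 \<mu> = {r. r \<ge> r\<^sub>0 \<and>
      (\<forall>t\<ge>r. real (zero_count f t) \<le> (t / r) powr \<mu> * real (zero_count f r)) \<and>
      (\<forall>t. r\<^sub>0 \<le> t \<and> t \<le> r \<longrightarrow> real (zero_count f t) \<ge> (t / r) powr \<mu> * real (zero_count f r))}"

end

theory Submission
  imports Defs
begin



lemma lmeas_sub: "S \<in> sets lebesgue \<Longrightarrow> S \<subseteq> {a..b::real} \<Longrightarrow> S \<in> lmeasurable"
  by (rule fmeasurableI2[of "{a..b}"]) auto

lemma sweep_aux:
  fixes g :: "real \<Rightarrow> real" and a b \<nu> :: real
  assumes nu: "\<nu> > 0" and mono: "\<And>s t. a \<le> s \<Longrightarrow> s \<le> t \<Longrightarrow> t \<le> b \<Longrightarrow> g s \<le> g t"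
    and fin: "finite (g ` {a..b})"
  shows "card {u \<in> g ` {a..b}. w < u} \<le> n \<Longrightarrow> a \<le> x \<Longrightarrow> x \<le> b \<Longrightarrow> (\<forall>s\<in>{x<..b}. w \<le> g s) \<Longrightarrow> w \<le> g b \<Longrightarrow>
     \<exists>S. S \<in> sets lebesgue \<and> S \<subseteq> {x<..b} \<and> (\<forall>r\<in>S. \<forall>t\<in>{r<..b}. g t - g r \<le> \<nu> * (t - r))
        \<and> measure lebesgue S \<ge> (b - x) - (g b - w) / \<nu>"
proof (induction n arbitrary: x w rule: less_induct)
  case (less n x w)
  define V where "V = g ` {a..b}"
  define A where "A v = {r \<in> {x<..b}. \<exists>t\<in>{r<..b}. g t = v \<and> g t - g r > \<nu> * (t - r)}" for v
  have AV: "r \<in> A (g t)" if "r \<in> {x<..b}" "t \<in> {r<..b}" "g t - g r > \<nu> * (t - r)" for r t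
    using that unfolding A_def by auto
  have gV: "g t \<in> V" if "a \<le> t" "t \<le> b" for t using that unfolding V_def by auto
  show ?case
  proof (cases "\<forall>v\<in>V. A v = {}")
    case True
    have good: "\<forall>r\<in>{x<..b}. \<forall>t\<in>{r<..b}. g t - g r \<le> \<nu> * (t - r)"
    proof (intro ballI)
      fix r t assume r: "r \<in> {x<..b}" and t: "t \<in> {r<..b}"
      show "g t - g r \<le> \<nu> * (t - r)"
      proof (rule ccontr)
        assume "\<not> ?thesis"
        then have "r \<in> A (g t)" using AV r t by auto
        moreover have "g t \<in> V" using gV r t less.prems(2) by auto
        ultimately show False using True by auto
      qed
    qed
    have "(b - x) - (g b - w) / \<nu> \<le> b - x" using less.prems(5) nu by simp
    then show ?thesis using good less.prems(3) by (intro exI[of _ "{x<..b}"]) auto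
  next
    case False
    define V' where "V' = {v\<in>V. A v \<noteq> {}}"
    have finV': "finite V'" using fin unfolding V'_def V_def by auto
    have neV': "V' \<noteq> {}" using False unfolding V'_def by auto
    define m where "m = Min ((\<lambda>v. Inf (A v)) ` V')"
    have "m \<in> (\<lambda>v. Inf (A v)) ` V'" unfolding m_def using finV' neV' by (intro Min_in) auto
    then obtain v where v: "v \<in> V'" and mv: "m = Inf (A v)" by auto
    have vmin: "Inf (A v) \<le> Inf (A v')" if "v' \<in> V'" for v'
      using that finV' unfolding mv[symmetric] m_def by (intro Min_le) auto
    have bddA: "bdd_below (A v')" for v' unfolding A_def by (rule bdd_belowI[of _ x]) auto
    define c where "c = Inf (A v)"
    have Ane: "A v \<noteq> {}" using v unfolding V'_def by auto
    have cle: "c \<le> r" if "r \<in> A v" for r unfolding c_def using that bddA by (intro cInf_lower) auto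
    have xc: "x \<le> c" unfolding c_def using Ane by (intro cInf_greatest) (auto simp: A_def)
    define T where "T = {t\<in>{x<..b}. g t = v}"
    obtain r1 where r1: "r1 \<in> A v" using Ane by auto
    then obtain t1 where t1: "t1 \<in> {r1<..b}" "g t1 = v" "g t1 - g r1 > \<nu> * (t1 - r1)"
      unfolding A_def by auto
    have r1x: "r1 \<in> {x<..b}" using r1 unfolding A_def by auto
    have t1T: "t1 \<in> T" using t1 r1x unfolding T_def by auto
    have bddT: "bdd_below T" unfolding T_def by (rule bdd_belowI[of _ x]) auto
    define \<tau> where "\<tau> = Inf T"
    have tau_le: "\<tau> \<le> t" if "t \<in> T" for t unfolding \<tau>_def using that bddT by (intro cInf_lower)
    have Aprop: "r < s \<and> w < v \<and> \<nu> * (\<tau> - r) < v - w" if r: "r \<in> A v" and s: "s \<in> T" for r s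
    proof -
      from r obtain t where rx: "r \<in> {x<..b}" and t: "t \<in> {r<..b}" "g t = v" "g t - g r > \<nu> * (t - r)"
        unfolding A_def by auto
      have "\<nu> * (t - r) > 0" using t nu by simp
      then have grv: "g r < v" using t by linarith
      have "r < s"
      proof (rule ccontr)
        assume "\<not> r < s"
        then have "g s \<le> g r" using mono[of s r] s rx less.prems(2) unfolding T_def by auto
        then show False using s grv unfolding T_def by auto
      qed
      moreover have wr: "w \<le> g r" using less.prems(4) rx by auto
      moreover have tT: "t \<in> T" using t rx unfolding T_def by auto
      have "\<tau> \<le> t" using tT by (rule tau_le)
      then have "\<nu> * (\<tau> - r) \<le> \<nu> * (t - r)" using nu by (intro mult_left_mono) auto
      ultimately show ?thesis using t grv by linarith
    qed
    have wv: "w < v" using Aprop[OF r1 t1T] by auto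
    have ctau: "c \<le> \<tau>"
    proof -
      have "r1 \<le> \<tau>" unfolding \<tau>_def using t1T Aprop[OF r1] by (intro cInf_greatest) (auto intro: less_imp_le)
      then show ?thesis using cle[OF r1] by auto
    qed
    have tauc: "\<tau> - (v - w) / \<nu> \<le> c"
      unfolding c_def
    proof (rule cInf_greatest[OF Ane])
      fix r assume r: "r \<in> A v"
      have "\<nu> * (\<tau> - r) < v - w" using Aprop[OF r t1T] by auto
      then have "\<tau> - r < (v - w) / \<nu>" using nu by (simp add: field_simps)
      then show "\<tau> - (v - w) / \<nu> \<le> r" by simp
    qed
    have tau_b: "\<tau> \<le> b" using tau_le[OF t1T] t1 by auto
    have tau_a: "a \<le> \<tau>" using xc ctau less.prems(2) by auto
    have gs: "\<forall>s\<in>{\<tau><..b}. v \<le> g s"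
    proof
      fix s assume s: "s \<in> {\<tau><..b}"
      then have "\<tau> < s" by auto
      then obtain t where t: "t \<in> T" "t < s" unfolding \<tau>_def using cInf_lessD[of T s] t1T by blast
      then show "v \<le> g s" using mono[of t s] s less.prems(2) unfolding T_def by auto
    qed
    have vgb: "v \<le> g b" using mono[of t1 b] t1 r1x less.prems(2) by auto
    have vV: "v \<in> g ` {a..b}" using v unfolding V'_def V_def by auto
    have card_lt: "card {u \<in> g ` {a..b}. v < u} < card {u \<in> g ` {a..b}. w < u}"
      using wv vV fin by (intro psubset_card_mono) auto
    obtain S' where S': "S' \<in> sets lebesgue" "S' \<subseteq> {\<tau><..b}"
      "\<forall>r\<in>S'. \<forall>t\<in>{r<..b}. g t - g r \<le> \<nu> * (t - r)"
      "measure lebesgue S' \<ge> (b - \<tau>) - (g b - v) / \<nu>"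
      using less.IH[OF _ order_refl tau_a tau_b gs vgb] card_lt less.prems(1) by auto
    define S where "S = {x<..<c} \<union> S'"
    have good1: "g t - g r \<le> \<nu> * (t - r)" if r: "r \<in> {x<..<c}" and t: "t \<in> {r<..b}" for r t
    proof (rule ccontr)
      assume "\<not> ?thesis"
      then have rA: "r \<in> A (g t)" using AV r t ctau tau_b by auto
      have "g t \<in> V'" using rA gV[of t] r t less.prems(2) unfolding V'_def by auto
      then have "c \<le> Inf (A (g t))" using vmin unfolding c_def by auto
      also have "\<dots> \<le> r" using rA bddA by (intro cInf_lower)
      finally show False using r by auto
    qed
    have "S' \<subseteq> {a..b}" using S'(2) tau_a by fastforce
    then have S'lm: "S' \<in> lmeasurable" using S'(1) by (rule lmeas_sub[rotated])
    have Ilm: "{x<..<c} \<in> lmeasurable" by simp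
    have disj: "S' - {x<..<c} = S'" using S' ctau by auto
    have "measure lebesgue S = measure lebesgue {x<..<c} + measure lebesgue S'"
      unfolding S_def using measure_Un2[OF Ilm S'lm] disj by simp
    also have "measure lebesgue {x<..<c} = c - x" using xc by simp
    finally have mS: "measure lebesgue S = c - x + measure lebesgue S'" .
    have "(b - x) - (g b - w) / \<nu> = (b - \<tau>) - (g b - v)/\<nu> + (\<tau> - (v - w)/\<nu>) - x"
      by (simp add: diff_divide_distrib)
    also have "\<dots> \<le> measure lebesgue S" using mS S'(4) tauc by linarith
    finally have mS2: "(b - x) - (g b - w) / \<nu> \<le> measure lebesgue S" .
    show ?thesis
    proof (intro exI[of _ S] conjI)
      show "S \<in> sets lebesgue" unfolding S_def using S' by auto
      show "S \<subseteq> {x<..b}" unfolding S_def using S' xc ctau tau_b by auto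
      show "\<forall>r\<in>S. \<forall>t\<in>{r<..b}. g t - g r \<le> \<nu> * (t - r)"
        unfolding S_def using good1 S'(3) by blast
    qed (rule mS2)
  qed
qed

lemma sweep1:
  fixes g :: "real \<Rightarrow> real" and a b \<nu> :: real
  assumes nu: "\<nu> > 0" and ab: "a \<le> b" and mono: "\<And>s t. a \<le> s \<Longrightarrow> s \<le> t \<Longrightarrow> t \<le> b \<Longrightarrow> g s \<le> g t"
    and fin: "finite (g ` {a..b})"
  shows "\<exists>S. S \<in> sets lebesgue \<and> S \<subseteq> {a..b} \<and> (\<forall>r\<in>S. \<forall>t\<in>{r<..b}. g t - g r \<le> \<nu> * (t - r))
        \<and> measure lebesgue S \<ge> (b - a) - (g b - g a) / \<nu>"
proof -
  have h1: "\<forall>s\<in>{a<..b}. g a \<le> g s" using mono by auto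
  have h2: "g a \<le> g b" using mono ab by auto
  obtain S where "S \<in> sets lebesgue" "S \<subseteq> {a<..b}" "(\<forall>r\<in>S. \<forall>t\<in>{r<..b}. g t - g r \<le> \<nu> * (t - r))"
        "measure lebesgue S \<ge> (b - a) - (g b - g a) / \<nu>"
    using sweep_aux[OF nu mono fin order_refl order_refl ab h1 h2] by blast
  then show ?thesis by (intro exI[of _ S]) auto
qed

lemma sweep2:
  fixes g :: "real \<Rightarrow> real" and a b \<nu> :: real
  assumes nu: "\<nu> > 0" and ab: "a \<le> b" and mono: "\<And>s t. a \<le> s \<Longrightarrow> s \<le> t \<Longrightarrow> t \<le> b \<Longrightarrow> g s \<le> g t"
    and fin: "finite (g ` {a..b})"
  shows "\<exists>S. S \<in> sets lebesgue \<and> S \<subseteq> {a..b} \<and> (\<forall>r\<in>S. \<forall>t\<in>{a..<r}. g r - g t \<le> \<nu> * (r - t))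
        \<and> measure lebesgue S \<ge> (b - a) - (g b - g a) / \<nu>"
proof -
  define h where "h x = - g (- x)" for x
  have monoh: "h s \<le> h t" if "-b \<le> s" "s \<le> t" "t \<le> -a" for s t
    using mono[of "-t" "-s"] that unfolding h_def by auto
  have "h ` {-b..-a} \<subseteq> uminus ` g ` {a..b}" unfolding h_def by force
  then have finh: "finite (h ` {-b..-a})" using fin by (meson finite_imageI finite_subset)
  obtain S where S: "S \<in> sets lebesgue" "S \<subseteq> {-b..-a}" "\<forall>r\<in>S. \<forall>t\<in>{r<..-a}. h t - h r \<le> \<nu> * (t - r)"
     "measure lebesgue S \<ge> (-a - -b) - (h (-a) - h (-b)) / \<nu>"
    using sweep1[OF nu _ monoh finh] ab by auto
  define S2 where "S2 = uminus ` S"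
  have S2m: "S2 \<in> sets lebesgue" unfolding S2_def
    by (rule differentiable_image_in_sets_lebesgue[OF S(1)]) (auto intro!: derivative_intros)
  have "measure lebesgue ((\<lambda>x. (-1) *\<^sub>R x + 0) ` S) = \<bar>-1\<bar> ^ DIM(real) * measure lebesgue S"
    by (rule measure_lebesgue_affine)
  then have mS2: "measure lebesgue S2 = measure lebesgue S" unfolding S2_def by simp
  show ?thesis
  proof (intro exI[of _ S2] conjI S2m)
    show "S2 \<subseteq> {a..b}" using S(2) unfolding S2_def by auto
    show "\<forall>r\<in>S2. \<forall>t\<in>{a..<r}. g r - g t \<le> \<nu> * (r - t)"
    proof (intro ballI)
      fix r t assume r: "r \<in> S2" and t: "t \<in> {a..<r}"
      then obtain s where s: "s \<in> S" "r = - s" unfolding S2_def by auto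
      have "-t \<in> {s<..-a}" using t s by auto
      then have "h (-t) - h s \<le> \<nu> * (-t - s)" using S(3) s by auto
      then show "g r - g t \<le> \<nu> * (r - t)" using s unfolding h_def by (simp add: algebra_simps)
    qed
    show "measure lebesgue S2 \<ge> (b - a) - (g b - g a) / \<nu>" using S(4) mS2 unfolding h_def by simp
  qed
qed

definition Fgen :: "(real \<Rightarrow> nat) \<Rightarrow> real \<Rightarrow> real \<Rightarrow> real set" where
  "Fgen n r\<^sub>0 \<mu> = {r. r \<ge> r\<^sub>0 \<and>
      (\<forall>t\<ge>r. real (n t) \<le> (t / r) powr \<mu> * real (n r)) \<and>
      (\<forall>t. r\<^sub>0 \<le> t \<and> t \<le> r \<longrightarrow> real (n t) \<ge> (t / r) powr \<mu> * real (n r))}"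

locale cnt =
  fixes n :: "real \<Rightarrow> nat" and I :: "real set" and r0 K :: real
  assumes out: "\<And>t. t \<notin> I \<Longrightarrow> n t = 0"
    and down: "\<And>s t. s \<le> t \<Longrightarrow> t \<in> I \<Longrightarrow> s \<in> I"
    and mono: "\<And>s t. s \<le> t \<Longrightarrow> t \<in> I \<Longrightarrow> n s \<le> n t"
    and r0: "r0 > 0" and K: "K > 1"
    and dbl: "\<And>r. r \<ge> r0 \<Longrightarrow> real (n (2 * r)) \<le> K * real (n r)"
begin

lemma dbl2: "t \<ge> 2 * r0 \<Longrightarrow> real (n t) \<le> K * real (n (t / 2))"
  using dbl[of "t/2"] by simp

lemma far1:
  assumes mu: "K^2 \<le> 2 powr \<mu>" "0 \<le> \<mu>" and r: "2*r0 \<le> r" "r \<in> I" and t: "2*r \<le> t"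
  shows "real (n t) \<le> (t/r) powr \<mu> * real (n r)"
proof -
  have rpos: "r > 0" using r r0 by auto
  have K1: "K \<le> 2 powr \<mu>" using K mu(1) by (smt (verit) power2_eq_square mult_le_cancel_left1)
  have P: "\<forall>t. 2*r \<le> t \<longrightarrow> t < 2^k * (4*r) \<longrightarrow> real (n t) \<le> (t/r) powr \<mu> * real (n r)" for k
  proof (induction k)
    case 0
    show ?case
    proof (intro allI impI)
      fix t assume t1: "2*r \<le> t" and t2: "t < 2^0 * (4*r)"
      have a: "real (n t) \<le> K * real (n (t/2))" using dbl2[of t] t1 r r0 by auto
      have b: "real (n (t/2)) \<le> K * real (n (t/4))" using dbl2[of "t/2"] t1 r r0 by auto
      have c: "n (t/4) \<le> n r" using mono[of "t/4" r] t2 r by auto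
      have "real (n t) \<le> K * (K * real (n r))"
        using a b c K by (smt (verit) mult_left_mono of_nat_le_iff)
      also have "\<dots> = K^2 * real (n r)" by (simp add: power2_eq_square)
      also have "K^2 \<le> (t/r) powr \<mu>"
      proof -
        have "2 \<le> t / r" using t1 rpos by (simp add: field_simps)
        then have "2 powr \<mu> \<le> (t/r) powr \<mu>" using mu by (intro powr_mono2) auto
        then show ?thesis using mu by auto
      qed
      then have "K^2 * real (n r) \<le> (t/r) powr \<mu> * real (n r)" by (intro mult_right_mono) auto
      finally show "real (n t) \<le> (t/r) powr \<mu> * real (n r)" .
    qed
  next
    case (Suc k)
    show ?case
    proof (intro allI impI)
      fix t assume t1: "2*r \<le> t" and t2: "t < 2^Suc k * (4*r)"
      show "real (n t) \<le> (t/r) powr \<mu> * real (n r)"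
      proof (cases "t < 2^k * (4*r)")
        case True then show ?thesis using Suc t1 by auto
      next
        case False
        have "(1::real) \<le> 2^k" by simp
        then have "1 * (4*r) \<le> 2^k * (4*r)" using rpos by (intro mult_right_mono) auto
        then have t4: "4 * r \<le> t" using False by linarith
        have "2*r \<le> t/2" "t/2 < 2^k * (4*r)" using t4 t2 by auto
        then have IH: "real (n (t/2)) \<le> (t/2/r) powr \<mu> * real (n r)"
          using Suc by blast
        have a: "real (n t) \<le> K * real (n (t/2))" using dbl2[of t] t1 r r0 by auto
        also have "\<dots> \<le> K * ((t/2/r) powr \<mu> * real (n r))" using IH K by auto
        also have "(t/2/r) powr \<mu> = (t/r) powr \<mu> / 2 powr \<mu>"
          using rpos t1 by (simp add: powr_divide[symmetric] mult.commute)
        also have "K * ((t/r) powr \<mu> / 2 powr \<mu> * real (n r)) = (K / 2 powr \<mu>) * ((t/r) powr \<mu> * real (n r))"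
          by simp
        also have "\<dots> \<le> 1 * ((t/r) powr \<mu> * real (n r))"
          using K1 by (intro mult_right_mono) auto
        finally show ?thesis by simp
      qed
    qed
  qed
  obtain k where "t / (4*r) < 2^k" using real_arch_pow[of 2 "t/(4*r)"] by auto
  then have "t < 2^k * (4*r)" using rpos by (simp add: field_simps)
  then show ?thesis using P t by auto
qed

lemma far2:
  assumes mu: "K^2 \<le> 2 powr \<mu>" "0 \<le> \<mu>" and t: "r0 \<le> t" and r: "2*t \<le> r" "r \<in> I"
  shows "real (n r) \<le> (r/t) powr \<mu> * real (n t)"
proof -
  have tpos: "t > 0" using t r0 by auto
  have K1: "K \<le> 2 powr \<mu>" using K mu(1) by (smt (verit) power2_eq_square mult_le_cancel_left1)
  have tI: "2*t \<in> I" using down r by auto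
  have P: "\<forall>r'. 2*t \<le> r' \<longrightarrow> r' \<le> r \<longrightarrow> r' < 2^k * (4*t) \<longrightarrow> real (n r') \<le> (r'/t) powr \<mu> * real (n t)" for k
  proof (induction k)
    case 0
    show ?case
    proof (intro allI impI)
      fix r' assume t1: "2*t \<le> r'" and rr: "r' \<le> r" and t2: "r' < 2^0 * (4*t)"
      have a: "real (n r') \<le> K * real (n (r'/2))" using dbl2[of r'] t1 t by auto
      have b: "n (r'/2) \<le> n (2*t)" using mono[of "r'/2" "2*t"] t2 tI by auto
      have c: "real (n (2*t)) \<le> K * real (n t)" using dbl[of t] t by auto
      have "real (n r') \<le> K * (K * real (n t))"
        using a b c K by (smt (verit) mult_left_mono of_nat_le_iff)
      also have "\<dots> = K^2 * real (n t)" by (simp add: power2_eq_square)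
      also have "K^2 \<le> (r'/t) powr \<mu>"
      proof -
        have "2 \<le> r' / t" using t1 tpos by (simp add: field_simps)
        then have "2 powr \<mu> \<le> (r'/t) powr \<mu>" using mu by (intro powr_mono2) auto
        then show ?thesis using mu by auto
      qed
      then have "K^2 * real (n t) \<le> (r'/t) powr \<mu> * real (n t)" by (intro mult_right_mono) auto
      finally show "real (n r') \<le> (r'/t) powr \<mu> * real (n t)" .
    qed
  next
    case (Suc k)
    show ?case
    proof (intro allI impI)
      fix r' assume t1: "2*t \<le> r'" and rr: "r' \<le> r" and t2: "r' < 2^Suc k * (4*t)"
      show "real (n r') \<le> (r'/t) powr \<mu> * real (n t)"
      proof (cases "r' < 2^k * (4*t)")
        case True then show ?thesis using Suc t1 rr by auto
      next
        case False
        have "(1::real) \<le> 2^k" by simp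
        then have "1 * (4*t) \<le> 2^k * (4*t)" using tpos by (intro mult_right_mono) auto
        then have t4: "4 * t \<le> r'" using False by linarith
        have "2*t \<le> r'/2" "r'/2 \<le> r" "r'/2 < 2^k * (4*t)" using t4 t2 rr tpos by auto
        then have IH: "real (n (r'/2)) \<le> (r'/2/t) powr \<mu> * real (n t)"
          using Suc by blast
        have "real (n r') \<le> K * real (n (r'/2))" using dbl2[of r'] t1 t by auto
        also have "\<dots> \<le> K * ((r'/2/t) powr \<mu> * real (n t))" using IH K by auto
        also have "(r'/2/t) powr \<mu> = (r'/t) powr \<mu> / 2 powr \<mu>"
          using tpos t1 by (simp add: powr_divide[symmetric] mult.commute)
        also have "K * ((r'/t) powr \<mu> / 2 powr \<mu> * real (n t)) = (K / 2 powr \<mu>) * ((r'/t) powr \<mu> * real (n t))"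
          by simp
        also have "\<dots> \<le> 1 * ((r'/t) powr \<mu> * real (n t))"
          using K1 by (intro mult_right_mono) auto
        finally show ?thesis by simp
      qed
    qed
  qed
  obtain k where "r / (4*t) < 2^k" using real_arch_pow[of 2 "r/(4*t)"] by auto
  then have "r < 2^k * (4*t)" using tpos by (simp add: field_simps)
  then show ?thesis using P r by auto
qed

lemma notI_F: "r0 \<le> r \<Longrightarrow> r \<notin> I \<Longrightarrow> r \<in> Fgen n r0 \<mu>"
proof -
  assume r: "r0 \<le> r" "r \<notin> I"
  have "t \<notin> I" if "t \<ge> r" for t using down that r by blast
  then show ?thesis using r out unfolding Fgen_def by auto
qed

lemma zero_F: "r0 \<le> r \<Longrightarrow> (\<forall>t\<ge>r. n t = 0) \<Longrightarrow> r \<in> Fgen n r0 \<mu>"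
  unfolding Fgen_def by auto

lemma nat_close: "\<bar>real a - real b\<bar> < 1 \<Longrightarrow> a = b"
proof (rule ccontr)
  assume ab: "\<bar>real a - real b\<bar> < 1" "a \<noteq> b"
  then have "a + 1 \<le> b \<or> b + 1 \<le> a" by auto
  then have "real a + 1 \<le> real b \<or> real b + 1 \<le> real a" by (metis of_nat_1 of_nat_add of_nat_le_iff)
  then show False using ab by auto
qed

lemma F_meas:
  assumes R: "r0 \<le> R"
  shows "Fgen n r0 \<mu> \<inter> {R..2*R} \<in> sets lebesgue"
proof -
  define C where "C = Fgen n r0 \<mu> \<inter> {R..2*R}"
  have monoN: "mono_on I (\<lambda>t. real (n t))"
    by (intro mono_onI) (auto intro: mono)
  define D where "D = {a\<in>I. \<not> continuous (at a within I) (\<lambda>t. real (n t))}"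
  have cD: "countable D" using mono_on_ctble_discont[OF monoN] unfolding D_def .
  define E where "E = {r \<in> I. \<forall>t'>r. t' \<notin> I}"
  have cE: "countable E"
  proof (cases "E = {}")
    case False
    then obtain x where x: "x \<in> E" by auto
    have "E \<subseteq> {x}"
    proof
      fix y assume y: "y \<in> E"
      show "y \<in> {x}"
      proof (cases y x rule: linorder_cases)
        case less then show ?thesis using x y unfolding E_def by auto
      next
        case greater then show ?thesis using x y unfolding E_def by auto
      qed auto
    qed
    then show ?thesis by (rule countable_subset) auto
  qed auto
  have clC: "closure C \<subseteq> {R..2*R}" by (rule closure_minimal) (auto simp: C_def)
  have key: "closure C - C \<subseteq> D \<union> E"
  proof
    fix r assume r: "r \<in> closure C - C"
    have rR: "R \<le> r" "r \<le> 2*R" using r clC by auto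
    have rF: "r \<notin> Fgen n r0 \<mu>" using r rR unfolding C_def by auto
    have rI: "r \<in> I" using notI_F[of r \<mu>] rF rR R by linarith
    have rpos: "r > 0" using rR R r0 by auto
    show "r \<in> D \<union> E"
    proof (rule ccontr)
      assume nDE: "r \<notin> D \<union> E"
      obtain t' where t': "t' > r" "t' \<in> I" using nDE rI unfolding E_def by auto
      have cont: "continuous (at r within I) (\<lambda>t. real (n t))" using nDE rI unfolding D_def by auto
      then have "\<exists>d>0. \<forall>x'\<in>I. dist x' r < d \<longrightarrow> dist (real (n x')) (real (n r)) < 1"
        unfolding continuous_within_eps_delta by auto
      then obtain d where d: "d > 0" "\<forall>x'\<in>I. dist x' r < d \<longrightarrow> dist (real (n x')) (real (n r)) < 1"
        by auto
      define \<epsilon> where "\<epsilon> = min d (t' - r)"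
      have epos: "\<epsilon> > 0" using d t' unfolding \<epsilon>_def by auto
      have loc: "n s = n r" if "dist s r < \<epsilon>" for s
      proof -
        have "s \<le> t'" using that unfolding \<epsilon>_def dist_real_def by auto
        then have "s \<in> I" using down t' by auto
        then have "\<bar>real (n s) - real (n r)\<bar> < 1" using d that unfolding \<epsilon>_def dist_real_def by auto
        then show ?thesis by (rule nat_close)
      qed
      have approach: "\<exists>c\<in>C. dist c r < e" if "e > 0" for e
        using r that closure_approachable by blast
      have cond1: "real (n t) \<le> (t/r) powr \<mu> * real (n r)" if tr: "t \<ge> r" for t
      proof (cases "t = r")
        case True then show ?thesis using rpos by simp
      next
        case False
        then have tr': "t > r" using tr by auto
        show ?thesis
        proof (rule ccontr)
          assume "\<not> ?thesis"
          then have lt: "0 < real (n t) - (t/r) powr \<mu> * real (n r)" by simp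
          have "continuous (at r) (\<lambda>c. (t/c) powr \<mu> * real (n r))"
            using rpos tr' by (intro continuous_intros) auto
          then obtain d2 where d2: "d2 > 0" "\<forall>c. dist c r < d2 \<longrightarrow> dist ((t/c) powr \<mu> * real (n r)) ((t/r) powr \<mu> * real (n r)) < real (n t) - (t/r) powr \<mu> * real (n r)"
            unfolding continuous_at_eps_delta using lt by blast
          obtain c where c: "c \<in> C" "dist c r < min \<epsilon> (min d2 (t - r))"
            using approach[of "min \<epsilon> (min d2 (t - r))"] epos d2 tr' by auto
          have cF: "c \<in> Fgen n r0 \<mu>" using c unfolding C_def by auto
          have ct: "c \<le> t" using c unfolding dist_real_def by auto
          have "real (n t) \<le> (t/c) powr \<mu> * real (n c)" using cF ct unfolding Fgen_def by auto
          moreover have "n c = n r" using loc c by auto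
          moreover have "dist ((t/c) powr \<mu> * real (n r)) ((t/r) powr \<mu> * real (n r)) < real (n t) - (t/r) powr \<mu> * real (n r)"
            using d2 c by auto
          ultimately show False unfolding dist_real_def by auto
        qed
      qed
      have cond2: "(t/r) powr \<mu> * real (n r) \<le> real (n t)" if tr: "r0 \<le> t" "t \<le> r" for t
      proof (cases "t = r")
        case True then show ?thesis using rpos by simp
      next
        case False
        then have tr': "t < r" using tr by auto
        have tpos: "t > 0" using tr r0 by auto
        show ?thesis
        proof (rule ccontr)
          assume "\<not> ?thesis"
          then have lt: "0 < (t/r) powr \<mu> * real (n r) - real (n t)" by simp
          have "continuous (at r) (\<lambda>c. (t/c) powr \<mu> * real (n r))"
            using rpos tpos by (intro continuous_intros) auto
          then obtain d2 where d2: "d2 > 0" "\<forall>c. dist c r < d2 \<longrightarrow> dist ((t/c) powr \<mu> * real (n r)) ((t/r) powr \<mu> * real (n r)) < (t/r) powr \<mu> * real (n r) - real (n t)"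
            unfolding continuous_at_eps_delta using lt by blast
          obtain c where c: "c \<in> C" "dist c r < min \<epsilon> (min d2 (r - t))"
            using approach[of "min \<epsilon> (min d2 (r - t))"] epos d2 tr' by auto
          have cF: "c \<in> Fgen n r0 \<mu>" using c unfolding C_def by auto
          have ct: "t \<le> c" using c unfolding dist_real_def by auto
          have "(t/c) powr \<mu> * real (n c) \<le> real (n t)" using cF ct tr unfolding Fgen_def by auto
          moreover have "n c = n r" using loc c by auto
          moreover have "dist ((t/c) powr \<mu> * real (n r)) ((t/r) powr \<mu> * real (n r)) < (t/r) powr \<mu> * real (n r) - real (n t)"
            using d2 c by auto
          ultimately show False unfolding dist_real_def by auto
        qed
      qed
      have "r \<in> Fgen n r0 \<mu>" unfolding Fgen_def using cond1 cond2 rR R by auto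
      then show False using rF by auto
    qed
  qed
  have "countable (closure C - C)" using key cD cE by (meson countable_Un countable_subset)
  then have c1: "closure C - C \<in> sets lebesgue"
    using countable_imp_null_set_lborel by (metis sets_completionI_sets null_setsD2)
  have c2: "closure C \<in> sets lebesgue" by simp
  have "C = closure C - (closure C - C)" using closure_subset by auto
  then have "C \<in> sets lebesgue" using c1 c2 by (metis sets.Diff)
  then show ?thesis unfolding C_def .
qed

lemma ln_ineq: "0 < (a::real) \<Longrightarrow> a \<le> b \<Longrightarrow> (b - a) / b \<le> ln b - ln a"
proof -
  assume ab: "0 < a" "a \<le> b"
  have "a / b > 0" using ab by simp
  then have "ln (a/b) \<le> a/b - 1" by (rule ln_le_minus_one)
  moreover have "ln (a/b) = ln a - ln b" using ab by (intro ln_divide_pos) auto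
  moreover have "a/b - 1 = - ((b - a)/b)" using ab by (simp add: field_simps)
  ultimately show ?thesis by linarith
qed

lemma ln_gap:
  fixes X q Y \<mu> :: real
  assumes X: "X \<ge> 1" and q: "q > 0" and lt: "q powr \<mu> * X < Y"
  shows "\<mu> * ln q < ln Y - ln X"
proof -
  have p: "q powr \<mu> > 0" using q powr_gt_zero by (metis less_irrefl)
  have "q powr \<mu> * X > 0" using p X by simp
  then have "Y > 0" using lt by linarith
  then have "ln (q powr \<mu> * X) < ln Y" using lt p X by (intro ln_less_cancel_iff[THEN iffD2]) auto
  moreover have "ln (q powr \<mu> * X) = \<mu> * ln q + ln X" using p X q by (simp add: ln_mult ln_powr)
  ultimately show ?thesis by linarith
qed

lemma Kpow: "K^2 \<le> 2 powr (2 * log 2 K)"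
proof -
  have "2 powr (2 * log 2 K) = 2 powr (log 2 K + log 2 K)" by simp
  also have "\<dots> = 2 powr log 2 K * 2 powr log 2 K" by (rule powr_add)
  also have "2 powr log 2 K = K" using K by (intro powr_log_cancel) auto
  finally show ?thesis by (simp add: power2_eq_square)
qed

theorem main:
  "\<forall>\<delta>>0. \<exists>\<mu>>0. \<forall>R\<ge>2 * r0. measure lebesgue (Fgen n r0 \<mu> \<inter> {R..2 * R}) \<ge> (1 - \<delta>) * R"
proof (intro allI impI)
  fix \<delta> :: real assume dpos: "\<delta> > 0"
  define \<mu> where "\<mu> = max (2 * log 2 K) (20 * ln K / \<delta>)"
  have lnK: "ln K > 0" using K by simp
  have l2K: "log 2 K > 0" using K by simp
  have mupos: "\<mu> > 0" unfolding \<mu>_def using l2K by auto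
  have mu1: "K^2 \<le> 2 powr \<mu>"
  proof -
    have "2 powr (2 * log 2 K) \<le> 2 powr \<mu>" unfolding \<mu>_def by (intro powr_mono) auto
    then show ?thesis using Kpow by linarith
  qed
  have mu2: "20 * ln K / \<mu> \<le> \<delta>"
  proof -
    have "20 * ln K / \<delta> \<le> \<mu>" unfolding \<mu>_def by auto
    then have "20 * ln K \<le> \<mu> * \<delta>" using dpos by (simp add: field_simps)
    then show ?thesis using mupos by (simp add: field_simps)
  qed
  show "\<exists>\<mu>>0. \<forall>R\<ge>2 * r0. measure lebesgue (Fgen n r0 \<mu> \<inter> {R..2 * R}) \<ge> (1 - \<delta>) * R"
  proof (intro exI[of _ \<mu>] conjI allI impI mupos)
    fix R assume R: "2 * r0 \<le> R"
    have Rpos: "R > 0" using R r0 by auto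
    have R0: "r0 \<le> R" using R r0 by auto
    have Fm: "Fgen n r0 \<mu> \<inter> {R..2*R} \<in> sets lebesgue" using F_meas[OF R0] .
    have Flm: "Fgen n r0 \<mu> \<inter> {R..2*R} \<in> lmeasurable"
      by (rule fmeasurableI2[of "{R..2*R}"]) (auto simp: Fm)
    have triv: "measure lebesgue (Fgen n r0 \<mu> \<inter> {R..2 * R}) \<ge> (1 - \<delta>) * R" if all: "{R..2*R} \<subseteq> Fgen n r0 \<mu>"
    proof -
      have "Fgen n r0 \<mu> \<inter> {R..2*R} = {R..2*R}" using all by auto
      then have "measure lebesgue (Fgen n r0 \<mu> \<inter> {R..2*R}) = R" using Rpos by simp
      then show "measure lebesgue (Fgen n r0 \<mu> \<inter> {R..2 * R}) \<ge> (1 - \<delta>) * R"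
        using dpos Rpos by (simp add: algebra_simps)
    qed
    show "measure lebesgue (Fgen n r0 \<mu> \<inter> {R..2 * R}) \<ge> (1 - \<delta>) * R"
    proof (cases "R \<in> I")
      case False
      have "{R..2*R} \<subseteq> Fgen n r0 \<mu>"
      proof
        fix r assume r: "r \<in> {R..2*R}"
        then have "r \<notin> I" using down False by auto
        then show "r \<in> Fgen n r0 \<mu>" using notI_F r R0 by auto
      qed
      then show ?thesis by (rule triv)
    next
      case RI: True
      have r0I: "2 * r0 \<in> I" using down R RI by auto
      show ?thesis
      proof (cases "n r0 = 0")
        case True
        have n0: "n t = 0" if t: "r0 \<le> t" for t
        proof (cases "t \<in> I")
          case False then show ?thesis using out by auto
        next
          case tI: True
          have z2: "n (2*r0) = 0" using far2[OF mu1 _ order_refl order_refl r0I] mupos True by simp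
          show ?thesis
          proof (cases "2 * r0 \<le> t")
            case True
            then show ?thesis using far2[OF mu1 _ order_refl True tI] mupos \<open>n r0 = 0\<close> by simp
          next
            case False
            then show ?thesis using mono[of t "2*r0"] r0I z2 by auto
          qed
        qed
        have "{R..2*R} \<subseteq> Fgen n r0 \<mu>"
        proof
          fix r assume r: "r \<in> {R..2*R}"
          then show "r \<in> Fgen n r0 \<mu>" using zero_F[of r] n0 R0 by auto
        qed
        then show ?thesis by (rule triv)
      next
        case False
        then have n1: "1 \<le> real (n t)" if "t \<in> I" "r0 \<le> t" for t
          using mono[of r0 t] that by (metis less_one not_less of_nat_1 of_nat_le_iff order_less_le_trans)
        have nR: "1 \<le> real (n R)" using n1 RI R0 by auto
        define Mx where "Mx = K^2 * real (n R)"
        have K2: "1 \<le> K^2" using K by (simp add: one_le_power)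
        have nRMx: "real (n R) \<le> Mx" unfolding Mx_def using K2 nR by (simp add: mult_le_cancel_right1)
        have bnd: "real (n t) \<le> Mx" if t: "t \<in> I" "t \<le> 4*R" for t
        proof (cases "t \<le> R")
          case True
          then show ?thesis using mono[of t R] RI nRMx by (smt (verit) of_nat_le_iff)
        next
          case False
          have a: "real (n t) \<le> K * real (n (t/2))" using dbl2[of t] False R by auto
          show ?thesis
          proof (cases "t/2 \<le> R")
            case True
            have "n (t/2) \<le> n R" using mono[of "t/2" R] True RI by auto
            then have "real (n t) \<le> K * real (n R)" using a K by (smt (verit) mult_left_mono of_nat_le_iff)
            also have "\<dots> \<le> K * K * real (n R)" using K nR by (simp add: mult_le_cancel_right1)
            finally show ?thesis unfolding Mx_def by (simp add: power2_eq_square)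
          next
            case False
            have b: "real (n (t/2)) \<le> K * real (n (t/4))" using dbl2[of "t/2"] False R by auto
            have c: "n (t/4) \<le> n R" using mono[of "t/4" R] t RI by auto
            have "real (n t) \<le> K * (K * real (n R))"
              using a b c K by (smt (verit) mult_left_mono of_nat_le_iff)
            then show ?thesis unfolding Mx_def by (simp add: power2_eq_square)
          qed
        qed
        define g where "g t = (if t \<in> I then ln (real (n t)) else ln Mx)" for t
        have gmono: "g s \<le> g t" if st: "R/2 \<le> s" "s \<le> t" "t \<le> 4*R" for s t
        proof -
          have s1: "1 \<le> real (n s)" if "s \<in> I" using n1 that st R by auto
          show ?thesis
          proof (cases "t \<in> I")
            case True
            then have "s \<in> I" "n s \<le> n t" using down mono st by auto
            then show ?thesis unfolding g_def using True s1 by auto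
          next
            case False
            show ?thesis
            proof (cases "s \<in> I")
              case True
              then have "real (n s) \<le> Mx" using bnd st by auto
              then show ?thesis unfolding g_def using True False s1 by auto
            qed (auto simp: g_def False)
          qed
        qed
        obtain m :: nat where m: "Mx < real m" using reals_Archimedean2 by auto
        have gfin: "finite (g ` {R/2..4*R})"
        proof -
          have "g ` {R/2..4*R} \<subseteq> insert (ln Mx) ((\<lambda>k. ln (real k)) ` {..<m})"
          proof
            fix y assume "y \<in> g ` {R/2..4*R}"
            then obtain t where t: "t \<in> {R/2..4*R}" "y = g t" by auto
            show "y \<in> insert (ln Mx) ((\<lambda>k. ln (real k)) ` {..<m})"
            proof (cases "t \<in> I")
              case True
              then have "real (n t) < real m" using bnd[of t] t m by auto
              then have "n t \<in> {..<m}" by auto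
              then show ?thesis using t True unfolding g_def by auto
            qed (use t in \<open>auto simp: g_def\<close>)
          qed
          then show ?thesis by (rule finite_subset) auto
        qed
        define \<nu> where "\<nu> = \<mu> / (4*R)"
        have nupos: "\<nu> > 0" unfolding \<nu>_def using mupos Rpos by simp
        have fin1: "finite (g ` {R..4*R})" using gfin by (rule finite_subset[rotated]) (use Rpos in auto)
        have fin2: "finite (g ` {R/2..2*R})" using gfin by (rule finite_subset[rotated]) (use Rpos in auto)
        have gm1: "\<And>s t. R \<le> s \<Longrightarrow> s \<le> t \<Longrightarrow> t \<le> 4*R \<Longrightarrow> g s \<le> g t" using gmono Rpos by auto
        have gm2: "\<And>s t. R/2 \<le> s \<Longrightarrow> s \<le> t \<Longrightarrow> t \<le> 2*R \<Longrightarrow> g s \<le> g t" using gmono Rpos by auto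
        obtain S1 where S1: "S1 \<in> sets lebesgue" "S1 \<subseteq> {R..4*R}"
          "\<forall>r\<in>S1. \<forall>t\<in>{r<..4*R}. g t - g r \<le> \<nu> * (t - r)"
          "measure lebesgue S1 \<ge> (4*R - R) - (g (4*R) - g R) / \<nu>"
          using sweep1[OF nupos _ gm1 fin1] Rpos by auto
        obtain S2 where S2: "S2 \<in> sets lebesgue" "S2 \<subseteq> {R/2..2*R}"
          "\<forall>r\<in>S2. \<forall>t\<in>{R/2..<r}. g r - g t \<le> \<nu> * (r - t)"
          "measure lebesgue S2 \<ge> (2*R - R/2) - (g (2*R) - g (R/2)) / \<nu>"
          using sweep2[OF nupos _ gm2 fin2] Rpos by auto
        have Mxpos: "Mx > 0" using nR nRMx by linarith
        have gR: "g R = ln (real (n R))" using RI unfolding g_def by auto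
        have gle: "g t \<le> ln Mx" if "t \<le> 4*R" "R/2 \<le> t" for t
        proof (cases "t \<in> I")
          case True
          then have "1 \<le> real (n t)" "real (n t) \<le> Mx" using n1 bnd that R by auto
          then show ?thesis unfolding g_def using True by auto
        qed (auto simp: g_def)
        have g4: "g (4*R) \<le> ln Mx" using gle Rpos by auto
        have g2: "g (2*R) \<le> ln Mx" using gle Rpos by auto
        have hI: "R/2 \<in> I" using down[of "R/2" R] RI Rpos by auto
        have gh: "g (R/2) = ln (real (n (R/2)))" using hI unfolding g_def by auto
        have lnMx: "ln Mx = 2 * ln K + ln (real (n R))"
          unfolding Mx_def using K nR by (simp add: ln_mult ln_realpow)
        have nRh: "real (n R) \<le> K * real (n (R/2))" using dbl[of "R/2"] R by auto
        have nh1: "1 \<le> real (n (R/2))" using n1 hI R by auto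
        have lnRh: "ln (real (n R)) \<le> ln K + ln (real (n (R/2)))"
        proof -
          have "ln (real (n R)) \<le> ln (K * real (n (R/2)))" using nRh nR by (subst ln_le_cancel_iff) auto
          also have "\<dots> = ln K + ln (real (n (R/2)))" using K nh1 by (simp add: ln_mult)
          finally show ?thesis .
        qed
        have d1: "g (4*R) - g R \<le> 2 * ln K" using g4 gR lnMx by linarith
        have d2: "g (2*R) - g (R/2) \<le> 3 * ln K" using g2 gh lnMx lnRh by linarith
        have nuinv: "x / \<nu> = 4 * R * x / \<mu>" for x unfolding \<nu>_def by (simp add: field_simps)
        have m1: "measure lebesgue S1 \<ge> 3*R - 8*R*ln K/\<mu>"
        proof -
          have "(g (4*R) - g R) / \<nu> \<le> (2 * ln K) / \<nu>" using d1 nupos by (intro divide_right_mono) auto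
          moreover have "(2 * ln K) / \<nu> = 8*R*ln K/\<mu>" using nuinv[of "2 * ln K"] by simp
          ultimately show ?thesis using S1(4) by linarith
        qed
        have m2: "measure lebesgue S2 \<ge> 3/2*R - 12*R*ln K/\<mu>"
        proof -
          have "(g (2*R) - g (R/2)) / \<nu> \<le> (3 * ln K) / \<nu>" using d2 nupos by (intro divide_right_mono) auto
          moreover have "(3 * ln K) / \<nu> = 12*R*ln K/\<mu>" using nuinv[of "3 * ln K"] by simp
          ultimately show ?thesis using S2(4) by linarith
        qed
        define A1 where "A1 = S1 \<inter> {R..2*R}"
        define A2 where "A2 = S2 \<inter> {R..2*R}"
        have Ims: "{R..2*R} \<in> sets lebesgue" by simp
        have A1s: "A1 \<in> sets lebesgue" "A2 \<in> sets lebesgue" unfolding A1_def A2_def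
          using sets.Int[OF S1(1) Ims] sets.Int[OF S2(1) Ims] by auto
        have A1sub: "A1 \<subseteq> {R..2*R}" "A2 \<subseteq> {R..2*R}" by (auto simp: A1_def A2_def)
        have Il0: "{R..2*R} \<in> lmeasurable" by simp
        have A1l: "A1 \<in> lmeasurable" by (rule fmeasurableI2[OF Il0 A1sub(1) A1s(1)])
        have A2l: "A2 \<in> lmeasurable" by (rule fmeasurableI2[OF Il0 A1sub(2) A1s(2)])
        have Il1: "{2*R..4*R} \<in> lmeasurable" "{R/2..R} \<in> lmeasurable" by auto
        have U1: "A1 \<union> {2*R..4*R} \<in> lmeasurable"
          by (rule fmeasurableI2[of "{R..4*R}"]) (use A1s A1sub in auto)
        have "measure lebesgue S1 \<le> measure lebesgue (A1 \<union> {2*R..4*R})"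
          using S1(1,2) U1 by (intro measure_mono_fmeasurable) (auto simp: A1_def)
        also have "\<dots> \<le> measure lebesgue A1 + measure lebesgue {2*R..4*R}"
          using A1s by (intro measure_Un_le) auto
        also have "measure lebesgue {2*R..4*R} = 2*R" using Rpos by simp
        finally have a1: "measure lebesgue S1 \<le> measure lebesgue A1 + 2*R" .
        have U2: "A2 \<union> {R/2..R} \<in> lmeasurable"
          by (rule fmeasurableI2[of "{R/2..2*R}"]) (use A1s A1sub in auto)
        have "measure lebesgue S2 \<le> measure lebesgue (A2 \<union> {R/2..R})"
          using S2(1,2) U2 by (intro measure_mono_fmeasurable) (auto simp: A2_def)
        also have "\<dots> \<le> measure lebesgue A2 + measure lebesgue {R/2..R}"
          using A1s by (intro measure_Un_le) auto
        also have "measure lebesgue {R/2..R} = R/2" using Rpos by simp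
        finally have a2: "measure lebesgue S2 \<le> measure lebesgue A2 + R/2" .
        have "measure lebesgue (A1 \<union> A2) \<le> measure lebesgue {R..2*R}"
          using A1s by (intro measure_mono_fmeasurable) (auto simp: A1_def A2_def)
        then have a3: "measure lebesgue (A1 \<union> A2) \<le> R" using Rpos by simp
        have a4: "measure lebesgue (A1 \<union> A2) = measure lebesgue A1 + measure lebesgue A2 - measure lebesgue (A1 \<inter> A2)"
          using A1l A2l by (rule measure_Un3)
        have mu3: "20 * R * ln K / \<mu> \<le> \<delta> * R"
        proof -
          have "20 * R * ln K / \<mu> = R * (20 * ln K / \<mu>)" by simp
          also have "\<dots> \<le> R * \<delta>" using mu2 Rpos by (intro mult_left_mono) auto
          finally show ?thesis by (simp add: mult.commute)
        qed
        have "8*R*ln K/\<mu> + 12*R*ln K/\<mu> = 20 * R * ln K / \<mu>" by (simp add: add_divide_distrib[symmetric])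
        then have mG: "measure lebesgue (A1 \<inter> A2) \<ge> (1 - \<delta>) * R"
          using a1 a2 a3 a4 m1 m2 mu3 by (simp add: algebra_simps)
        have Gsub: "A1 \<inter> A2 \<subseteq> Fgen n r0 \<mu> \<inter> {R..2*R}"
        proof
          fix r assume rG: "r \<in> A1 \<inter> A2"
          then have r: "r \<in> S1" "r \<in> S2" "R \<le> r" "r \<le> 2*R" unfolding A1_def A2_def by auto
          have rpos: "r > 0" using r Rpos by auto
          have "r \<in> Fgen n r0 \<mu>"
          proof (cases "r \<in> I")
            case False then show ?thesis using notI_F r R0 by auto
          next
            case rI: True
            have nr1: "1 \<le> real (n r)" using n1 rI r R0 by auto
            have gr: "g r = ln (real (n r))" using rI unfolding g_def by auto
            have c1: "real (n t) \<le> (t/r) powr \<mu> * real (n r)" if tr: "r \<le> t" for t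
            proof (cases "t \<in> I")
              case False then show ?thesis using out by simp
            next
              case tI: True
              show ?thesis
              proof (cases "2*r \<le> t")
                case True then show ?thesis using far1[OF mu1 _ _ rI True] mupos R r by auto
              next
                case False
                show ?thesis
                proof (rule ccontr)
                  assume "\<not> ?thesis"
                  then have lt: "(t/r) powr \<mu> * real (n r) < real (n t)" by simp
                  have ne: "t \<noteq> r" using lt rpos by auto
                  have tpos: "t > 0" using tr rpos by auto
                  have gap: "\<mu> * ln (t/r) < ln (real (n t)) - ln (real (n r))"
                    using ln_gap[OF nr1 _ lt] rpos tpos by auto
                  have li: "(t - r)/t \<le> ln t - ln r" using ln_ineq[of r t] rpos tr by auto
                  have lnq: "ln (t/r) = ln t - ln r" using rpos tpos by (simp add: ln_div)
                  have "(t - r)/(4*R) \<le> (t - r)/t"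
                    using False r tpos tr by (intro divide_left_mono) auto
                  then have "\<nu> * (t - r) \<le> \<mu> * ln (t/r)"
                    unfolding \<nu>_def lnq using li mupos
                    by (smt (verit, ccfv_threshold) mult_left_mono times_divide_eq_left times_divide_eq_right)
                  then have "\<nu> * (t - r) < g t - g r" using gap gr tI unfolding g_def by auto
                  moreover have "t \<in> {r<..4*R}" using ne tr False r by auto
                  ultimately show False using S1(3) r(1) by fastforce
                qed
              qed
            qed
            have c2: "(t/r) powr \<mu> * real (n r) \<le> real (n t)" if tr: "r0 \<le> t" "t \<le> r" for t
            proof -
              have tpos: "t > 0" using tr r0 by auto
              show ?thesis
              proof (cases "2*t \<le> r")
                case True
                have "real (n r) \<le> (r/t) powr \<mu> * real (n t)" using far2[OF mu1 _ tr(1) True rI] mupos by auto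
                then have "(t/r) powr \<mu> * real (n r) \<le> (t/r) powr \<mu> * ((r/t) powr \<mu> * real (n t))"
                  by (intro mult_left_mono) auto
                also have "\<dots> = ((t/r) powr \<mu> * (r/t) powr \<mu>) * real (n t)" by (simp add: mult.assoc)
                also have "(t/r) powr \<mu> * (r/t) powr \<mu> = ((t/r) * (r/t)) powr \<mu>"
                  by (rule powr_mult[symmetric])
                also have "(t/r) * (r/t) = 1" using tpos rpos by simp
                finally show ?thesis by simp
              next
                case False
                have t2: "R/2 \<le> t" using False r by auto
                have tI: "t \<in> I" using down tr rI by auto
                have nt1: "1 \<le> real (n t)" using n1 tI tr by auto
                show ?thesis
                proof (rule ccontr)
                  assume "\<not> ?thesis"
                  then have lt: "real (n t) < (t/r) powr \<mu> * real (n r)" by simp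
                  have ne: "t \<noteq> r" using lt rpos by auto
                  have p: "(t/r) powr \<mu> > 0" using tpos rpos by simp
                  have "ln (real (n t)) < ln ((t/r) powr \<mu> * real (n r))"
                    using lt nt1 p nr1 by (subst ln_less_cancel_iff) auto
                  also have "\<dots> = \<mu> * ln (t/r) + ln (real (n r))" using p nr1 tpos rpos by (simp add: ln_mult ln_powr)
                  also have "ln (t/r) = - (ln r - ln t)" using rpos tpos by (simp add: ln_div)
                  finally have gap: "\<mu> * (ln r - ln t) < ln (real (n r)) - ln (real (n t))" by (simp add: algebra_simps)
                  have li: "(r - t)/r \<le> ln r - ln t" using ln_ineq[of t r] tpos tr by auto
                  have "(r - t)/(4*R) \<le> (r - t)/r"
                    using r tr rpos by (intro divide_left_mono) auto
                  then have "\<nu> * (r - t) \<le> \<mu> * (ln r - ln t)"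
                    unfolding \<nu>_def using li mupos
                    by (smt (verit, ccfv_threshold) mult_left_mono times_divide_eq_left times_divide_eq_right)
                  then have "\<nu> * (r - t) < g r - g t" using gap gr tI unfolding g_def by auto
                  moreover have "t \<in> {R/2..<r}" using ne tr t2 by auto
                  ultimately show False using S2(3) r(2) by fastforce
                qed
              qed
            qed
            show ?thesis unfolding Fgen_def using c1 c2 r R0 by auto
          qed
          then show "r \<in> Fgen n r0 \<mu> \<inter> {R..2*R}" using r by auto
        qed
        have "measure lebesgue (A1 \<inter> A2) \<le> measure lebesgue (Fgen n r0 \<mu> \<inter> {R..2*R})"
          using Gsub A1s Flm by (intro measure_mono_fmeasurable) auto
        then show ?thesis using mG by linarith
      qed
    qed
  qed
qed

end

theorem lemma4:
  fixes f :: "complex \<Rightarrow> complex" and r\<^sub>0 K :: real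
  assumes "f holomorphic_on UNIV"
    and "finite_order f"
    and "\<exists>z. f z \<noteq> 0"
    and "r\<^sub>0 > 0" and "K > 1"
    and "\<And>r. r \<ge> r\<^sub>0 \<Longrightarrow> real (zero_count f (2 * r)) \<le> K * real (zero_count f r)"
  shows "\<forall>\<delta>>0. \<exists>\<mu>>0. \<forall>R\<ge>2 * r\<^sub>0.
           measure lebesgue (F_set f r\<^sub>0 \<mu> \<inter> {R..2 * R}) \<ge> (1 - \<delta>) * R"
proof -
  define I where "I = {t. finite {z. f z = 0 \<and> norm z \<le> t}}"
  interpret C: cnt "zero_count f" I "r\<^sub>0" K
  proof
    fix t assume "t \<notin> I"
    then show "zero_count f t = 0" unfolding I_def zero_count_def by simp
  next
    fix s t assume st: "s \<le> t" "t \<in> I"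
    then show "s \<in> I" unfolding I_def by (auto elim: finite_subset[rotated])
  next
    fix s t assume st: "s \<le> t" "t \<in> I"
    then show "zero_count f s \<le> zero_count f t" unfolding I_def zero_count_def
      by (intro sum_mono2) auto
  qed (use assms in auto)
  have "F_set f r\<^sub>0 \<mu> = Fgen (zero_count f) r\<^sub>0 \<mu>" for \<mu>
    unfolding F_set_def Fgen_def by simp
  then show ?thesis using C.main by simp
qed

end
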